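(* Let $\Gamma$ be a distance-regular graph with $n$ vertices, valency $k\geq 3$, diameter $D\geq 2$, $a_1\neq 0$ and distinct eigenvalues $\theta_0>\theta_1>\cdots>\theta_D=-\frac{k}{a_1+1}$. Then $\theta_1\geq \frac{k-(a_1+1)(a_1+2)}{(a_1+1)^2}$, and equality holds if and only if $E_D$ is a light tail with associated minimal idempotent $E_1$.
   Context: A connected graph $\Gamma$ of diameter $D$ is distance-regular if there are integers $b_i,c_i$ ($0\le i\le D$) such that for any vertices $x,y$ at distance $i$, $y$ has exactly $c_i$ neighbours at distance $i-1$ from $x$ and $b_i$ neighbours at distance $i+1$ from $x$; $k=b_0$ and $a_i=k-b_i-c_i$. The eigenvalues are those of the adjacency matrix; $E_i$ denotes the orthogonal projection onto the $\theta_i$-eigenspace (minimal idempotent), with $E_0=\frac1n J$. A minimal idempotent $E$ is a light tail if $E\circ E=aE_0+bF$ (entrywise product) for some minimal idempotent $F\neq E_0$ and nonzero reals $a,b$; $F$ is the associated minimal idempotent. *)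

theory Defs
  imports "HOL-Analysis.Analysis"
begin

definition simple_graph :: "('n \<Rightarrow> 'n \<Rightarrow> bool) \<Rightarrow> bool" where
  "simple_graph E \<longleftrightarrow> (\<forall>x y. E x y \<longrightarrow> E y x) \<and> (\<forall>x. \<not> E x x)"

fun walk :: "('n \<Rightarrow> 'n \<Rightarrow> bool) \<Rightarrow> nat \<Rightarrow> 'n \<Rightarrow> 'n \<Rightarrow> bool" where
  "walk E 0 x y = (x = y)"
| "walk E (Suc m) x y = (\<exists>z. E x z \<and> walk E m z y)"

definition connected_graph :: "('n \<Rightarrow> 'n \<Rightarrow> bool) \<Rightarrow> bool" where
  "connected_graph E \<longleftrightarrow> (\<forall>x y. \<exists>m. walk E m x y)"

text \<open>Path-length distance (meaningful for connected graphs).\<close>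
definition gdist :: "('n \<Rightarrow> 'n \<Rightarrow> bool) \<Rightarrow> 'n \<Rightarrow> 'n \<Rightarrow> nat" where
  "gdist E x y = (LEAST m. walk E m x y)"

definition diameter_is :: "('n \<Rightarrow> 'n \<Rightarrow> bool) \<Rightarrow> nat \<Rightarrow> bool" where
  "diameter_is E D \<longleftrightarrow> (\<forall>x y. gdist E x y \<le> D) \<and> (\<exists>x y. gdist E x y = D)"

definition distance_regular ::
  "('n \<Rightarrow> 'n \<Rightarrow> bool) \<Rightarrow> nat \<Rightarrow> (nat \<Rightarrow> nat) \<Rightarrow> (nat \<Rightarrow> nat) \<Rightarrow> bool" where
  "distance_regular E D b c \<longleftrightarrow>
     simple_graph E \<and> connected_graph E \<and> diameter_is E D \<and>
     (\<forall>i \<le> D. \<forall>x y. gdist E x y = i \<longrightarrow>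
        card {z. E y z \<and> gdist E x z + 1 = i} = c i \<and>
        card {z. E y z \<and> gdist E x z = i + 1} = b i)"

definition adj_matrix :: "('n::finite \<Rightarrow> 'n \<Rightarrow> bool) \<Rightarrow> real^'n^'n" where
  "adj_matrix E = (\<chi> x y. if E x y then 1 else 0)"

definition eigenvalues :: "real^'n::finite^'n \<Rightarrow> real set" where
  "eigenvalues A = {\<theta>. \<exists>v. v \<noteq> 0 \<and> A *v v = \<theta> *\<^sub>R v}"

definition eigenspace :: "real^'n::finite^'n \<Rightarrow> real \<Rightarrow> (real^'n) set" where
  "eigenspace A \<theta> = {v. A *v v = \<theta> *\<^sub>R v}"

text \<open>Minimal idempotent: matrix of the orthogonal projection onto the eigenspace.\<close>
definition min_idem :: "real^'n::finite^'n \<Rightarrow> real \<Rightarrow> real^'n^'n" where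
  "min_idem A \<theta> = matrix (closest_point (eigenspace A \<theta>))"

definition hadamard :: "real^'n::finite^'n \<Rightarrow> real^'n^'n \<Rightarrow> real^'n^'n" where
  "hadamard M N = (\<chi> i j. M $ i $ j * N $ i $ j)"

text \<open>E is a light tail with associated minimal idempotent F (E0 = J/n).\<close>
definition light_tail_with :: "real^'n::finite^'n \<Rightarrow> real^'n^'n \<Rightarrow> real^'n^'n \<Rightarrow> bool" where
  "light_tail_with E0 E F \<longleftrightarrow> F \<noteq> E0 \<and>
     (\<exists>a b. a \<noteq> 0 \<and> b \<noteq> 0 \<and> hadamard E E = a *\<^sub>R E0 + b *\<^sub>R F)"

end

theory Submission
  imports Defs
begin

locale drg =
  fixes G :: "'n::finite \<Rightarrow> 'n \<Rightarrow> bool" and D :: nat and b c :: "nat \<Rightarrow> nat"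
  assumes drg: "distance_regular G D b c" and D2: "D \<ge> 2"
begin

abbreviation "d \<equiv> gdist G"
abbreviation "N x \<equiv> {z. G x z}"

lemma sg: "simple_graph G"
  using drg[unfolded distance_regular_def] by (elim conjE)
lemma symG: "G x y \<Longrightarrow> G y x"
  using sg unfolding simple_graph_def by (elim conjE) simp
lemma irrG: "\<not> G x x"
  using sg unfolding simple_graph_def by (elim conjE) simp
lemma cg: "connected_graph G"
  using drg[unfolded distance_regular_def] by (elim conjE)
lemma conn: "\<exists>m. walk G m x y"
  using cg unfolding connected_graph_def by simp

lemma walk_append: "walk G m x y \<Longrightarrow> walk G n y z \<Longrightarrow> walk G (m+n) x z"
proof (induction m arbitrary: x)
  case 0 then show ?case by simp
next
  case (Suc m)
  then obtain w where w: "G x w" "walk G m w y" by auto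
  have "walk G (m+n) w z" using Suc.IH[OF w(2) Suc.prems(2)] .
  then show ?case using w(1) by auto
qed

lemma walk_snoc: "walk G m x y \<Longrightarrow> G y z \<Longrightarrow> walk G (Suc m) x z"
  using walk_append[of m x y 1 z] by auto

lemma walk_rev: "walk G m x y \<Longrightarrow> walk G m y x"
proof (induction m arbitrary: x)
  case 0 then show ?case by simp
next
  case (Suc m)
  then obtain z where z: "G x z" "walk G m z y" by auto
  have "walk G m y z" using Suc.IH[OF z(2)] .
  then show ?case using walk_snoc[of m y z x] symG[OF z(1)] by simp
qed

lemma d_walk: "walk G (d x y) x y"
  unfolding gdist_def using conn by (rule LeastI_ex)

lemma d_le: "walk G m x y \<Longrightarrow> d x y \<le> m"
  unfolding gdist_def by (rule Least_le)

lemma d_sym: "d x y = d y x"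
proof -
  have "d x y \<le> d y x" for x y using d_le[OF walk_rev[OF d_walk[of y x]]] .
  then show ?thesis using le_antisym by blast
qed

lemma d_0: "d x y = 0 \<longleftrightarrow> x = y"
proof
  assume "d x y = 0" then show "x = y" using d_walk[of x y] by simp
next
  assume "x = y" then show "d x y = 0" using d_le[of 0 x y] by simp
qed

lemma d_adj: "G x z \<Longrightarrow> d x z = 1"
proof -
  assume a: "G x z"
  have "walk G 1 x z" using a by simp
  then have "d x z \<le> 1" by (rule d_le)
  moreover have "d x z \<noteq> 0"
  proof
    assume "d x z = 0"
    then have "x = z" using d_0 by simp
    then show False using a irrG by simp
  qed
  ultimately show ?thesis by simp
qed

lemma d_step: "G x z \<Longrightarrow> d y z \<le> d y x + 1"
proof -
  assume "G x z"
  then have "walk G (Suc (d y x)) y z" by (rule walk_snoc[OF d_walk])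
  then show ?thesis using d_le by fastforce
qed

lemma d_step2: "G x z \<Longrightarrow> d y x \<le> d y z + 1"
  by (rule d_step[OF symG])

lemma diamH: "diameter_is G D"
  using drg[unfolded distance_regular_def] by (elim conjE)

lemma diam: "d x y \<le> D"
  using diamH unfolding diameter_is_def by (elim conjE) simp

lemma diam_ex: "\<exists>x y. d x y = D"
  using diamH unfolding diameter_is_def by (elim conjE)

lemma drgH: "\<forall>i \<le> D. \<forall>x y. d x y = i \<longrightarrow>
        card {z. G y z \<and> d x z + 1 = i} = c i \<and>
        card {z. G y z \<and> d x z = i + 1} = b i"
  using drg[unfolded distance_regular_def] by (elim conjE)

lemma cnt_c: "d x y = i \<Longrightarrow> card {z. G y z \<and> d x z + 1 = i} = c i"
  using drgH diam[of x y] by simp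
lemma cnt_b: "d x y = i \<Longrightarrow> card {z. G y z \<and> d x z = i + 1} = b i"
  using drgH diam[of x y] by simp

lemma deg: "card (N x) = b 0"
proof -
  have "{z. G x z \<and> d x z = 0 + 1} = N x" using d_adj by auto
  then show ?thesis using cnt_b[of x x 0] d_0 by simp
qed

lemma c0: "c 0 = 0"
  using cnt_c[of x x 0] d_0 by simp

lemma pred_ex: "d x y = Suc m \<Longrightarrow> \<exists>z. G y z \<and> d x z = m"
proof -
  assume a: "d x y = Suc m"
  have "walk G (Suc m) y x" using walk_rev[OF d_walk[of x y]] a by simp
  then obtain z where z: "G y z" "walk G m z x" by auto
  have "d x z \<le> m" using d_le[OF walk_rev[OF z(2)]] .
  moreover have "d x y \<le> d x z + 1" using d_step[OF symG[OF z(1)]] .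
  ultimately show ?thesis using a z(1) by auto
qed

lemma pair_ex: "m \<le> D \<Longrightarrow> \<exists>x y. d x y = m"
proof -
  have "\<forall>i \<le> D. \<exists>x y. d x y = D - i"
  proof (intro allI impI)
    fix i assume "i \<le> D"
    then show "\<exists>x y. d x y = D - i"
    proof (induction i)
      case 0 then show ?case using diam_ex by simp
    next
      case (Suc i)
      then obtain x y where "d x y = Suc (D - Suc i)"
        by (metis Suc_diff_Suc Suc_leD Suc_le_lessD)
      then show ?case using pred_ex by blast
    qed
  qed
  moreover assume "m \<le> D"
  ultimately show ?thesis by (metis diff_diff_cancel diff_le_self)
qed

lemma c_pos: "1 \<le> j \<Longrightarrow> j \<le> D \<Longrightarrow> c j \<ge> 1"
proof -
  assume j: "1 \<le> j" "j \<le> D"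
  then obtain m where m: "j = Suc m" by (cases j) auto
  obtain x y where xy: "d x y = j" using pair_ex j by blast
  then obtain z where "G y z" "d x z = m" using pred_ex m by blast
  then have "z \<in> {z. G y z \<and> d x z + 1 = j}" using m by simp
  then have "card {z. G y z \<and> d x z + 1 = j} \<noteq> 0"
    using card_0_eq[of "{z. G y z \<and> d x z + 1 = j}"] by auto
  then have "card {z. G y z \<and> d x z + 1 = j} \<ge> 1" by linarith
  moreover have "card {z. G y z \<and> d x z + 1 = j} = c j" by (rule cnt_c[OF xy])
  ultimately show ?thesis by linarith
qed

lemma c1: "c 1 = 1"
proof -
  obtain x y where xy: "d x y = 1" using pair_ex[of 1] D2 by auto
  have "{z. G y z \<and> d x z + 1 = 1} = {x}"
  proof -
    have "walk G 1 x y" using d_walk[of x y] xy by simp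
    then have "G x y" by auto
    then have Gyx: "G y x" by (rule symG)
    show ?thesis
    proof (intro set_eqI iffI)
      fix z assume "z \<in> {z. G y z \<and> d x z + 1 = 1}"
      then have "d x z = 0" by simp
      then show "z \<in> {x}" using d_0[of x z] by simp
    next
      fix z assume "z \<in> {x}"
      then show "z \<in> {z. G y z \<and> d x z + 1 = 1}" using Gyx d_0[of x x] by simp
    qed
  qed
  then show ?thesis using cnt_c[OF xy] by simp
qed

end


context drg begin

lemma GL:
  assumes xy: "d y x = j"
  shows "(\<Sum>z\<in>N x. g (d y z)) = real (c j) * g (j - 1)
           + (real (b 0) - real (b j) - real (c j)) * g j + real (b j) * g (j + 1)"
proof -
  define S1 where "S1 = {z. G x z \<and> d y z + 1 = j}"
  define S2 where "S2 = {z. G x z \<and> d y z = j}"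
  define S3 where "S3 = {z. G x z \<and> d y z = j + 1}"
  have c1': "card S1 = c j" unfolding S1_def by (rule cnt_c[OF xy])
  have c3: "card S3 = b j" unfolding S3_def by (rule cnt_b[OF xy])
  have N: "N x = S1 \<union> S2 \<union> S3"
  proof (intro set_eqI iffI)
    fix z assume "z \<in> N x"
    then have z: "G x z" by simp
    have "d y z \<le> d y x + 1" by (rule d_step[OF z])
    moreover have "d y x \<le> d y z + 1" by (rule d_step2[OF z])
    ultimately have "d y z + 1 = j \<or> d y z = j \<or> d y z = j + 1" using xy by linarith
    then show "z \<in> S1 \<union> S2 \<union> S3" unfolding S1_def S2_def S3_def using z by blast
  next
    fix z assume "z \<in> S1 \<union> S2 \<union> S3"
    then show "z \<in> N x" unfolding S1_def S2_def S3_def by blast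
  qed
  have d12: "S1 \<inter> S2 = {}" unfolding S1_def S2_def by auto
  have d123: "(S1 \<union> S2) \<inter> S3 = {}" unfolding S1_def S2_def S3_def by auto
  have fin: "finite S1" "finite S2" "finite S3" by simp_all
  have cardN: "card S1 + card S2 + card S3 = b 0"
    using deg[of x] N card_Un_disjoint[OF _ _ d12] card_Un_disjoint[OF _ _ d123] fin
    by (metis finite_UnI)
  have s1: "(\<Sum>z\<in>S1. g (d y z)) = real (card S1) * g (j - 1)"
  proof -
    have "(\<Sum>z\<in>S1. g (d y z)) = (\<Sum>z\<in>S1. g (j - 1))"
      by (rule sum.cong) (auto simp: S1_def)
    then show ?thesis by simp
  qed
  have s2: "(\<Sum>z\<in>S2. g (d y z)) = real (card S2) * g j"
  proof -
    have "(\<Sum>z\<in>S2. g (d y z)) = (\<Sum>z\<in>S2. g j)"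
      by (rule sum.cong) (auto simp: S2_def)
    then show ?thesis by simp
  qed
  have s3: "(\<Sum>z\<in>S3. g (d y z)) = real (card S3) * g (j + 1)"
  proof -
    have "(\<Sum>z\<in>S3. g (d y z)) = (\<Sum>z\<in>S3. g (j + 1))"
      by (rule sum.cong) (auto simp: S3_def)
    then show ?thesis by simp
  qed
  have "(\<Sum>z\<in>N x. g (d y z)) = (\<Sum>z\<in>S1. g (d y z)) + (\<Sum>z\<in>S2. g (d y z)) + (\<Sum>z\<in>S3. g (d y z))"
    unfolding N using sum.union_disjoint[OF _ _ d12] sum.union_disjoint[OF _ _ d123] fin
    by (metis finite_UnI)
  also have "\<dots> = real (c j) * g (j - 1) + real (card S2) * g j + real (b j) * g (j + 1)"
    using s1 s2 s3 c1' c3 by simp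
  also have "real (card S2) = real (b 0) - real (b j) - real (c j)"
    using cardN c1' c3 by linarith
  finally show ?thesis .
qed

lemma cb_le: assumes jD: "j \<le> D" shows "c j + b j \<le> b 0"
proof -
  obtain x y where xy: "d y x = j" using pair_ex[OF jD] by blast
  have "card {z. G x z \<and> d y z + 1 = j} + card {z. G x z \<and> d y z = j + 1}
     = card ({z. G x z \<and> d y z + 1 = j} \<union> {z. G x z \<and> d y z = j + 1})"
    by (rule card_Un_disjoint[symmetric]) auto
  also have "\<dots> \<le> card (N x)" by (rule card_mono) auto
  finally show ?thesis using cnt_c[OF xy] cnt_b[OF xy] deg[of x] by simp
qed

lemma b1_pos: "b 1 \<ge> 1"
proof -
  obtain x y where xy: "d x y = 2" using pair_ex[of 2] D2 by blast
  then obtain z where z: "G y z" "d x z = 1" using pred_ex[of x y 1] by auto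
  have "y \<in> {w. G z w \<and> d x w = 1 + 1}" using symG[OF z(1)] xy by simp
  then have "card {w. G z w \<and> d x w = 1 + 1} \<noteq> 0"
    using card_0_eq[of "{w. G z w \<and> d x w = 1 + 1}"] by auto
  moreover have "card {w. G z w \<and> d x w = 1 + 1} = b 1" by (rule cnt_b[OF z(2)])
  ultimately show ?thesis by linarith
qed

end


lemma subspace_eigenspace: "subspace (eigenspace (M::real^'n::finite^'n) l)"
  unfolding subspace_def eigenspace_def
  by (simp add: matrix_vector_right_distrib matrix_vector_mult_scaleR scaleR_add_right)

lemma cp_in: "subspace S \<Longrightarrow> closest_point S a \<in> S"
  for S :: "(real^'n::finite) set"
proof -
  assume S: "subspace S"
  have "S \<noteq> {}" using subspace_0[OF S] by blast
  then show ?thesis by (rule closest_point_in_set[OF closed_subspace[OF S]])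
qed

lemma cp_orth:
  fixes S :: "(real^'n::finite) set"
  assumes S: "subspace S" and x: "x \<in> S"
  shows "inner (a - closest_point S a) x = 0"
proof -
  let ?p = "closest_point S a"
  have p: "?p \<in> S" by (rule cp_in[OF S])
  have cv: "convex S" by (rule subspace_imp_convex[OF S])
  have cl: "closed S" by (rule closed_subspace[OF S])
  have "?p + x \<in> S" using p x S by (simp add: subspace_add)
  from closest_point_dot[OF cv cl this, of a] have 1: "inner (a - ?p) x \<le> 0" by simp
  have "?p - x \<in> S" using p x S by (simp add: subspace_diff)
  from closest_point_dot[OF cv cl this, of a] have 2: "inner (a - ?p) (- x) \<le> 0" by simp
  from 1 2 show ?thesis by (simp add: inner_minus_right)
qed

lemma cp_unique:
  fixes S :: "(real^'n::finite) set"
  assumes S: "subspace S" and y: "y \<in> S" and o: "\<forall>x\<in>S. inner (a - y) x = 0"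
  shows "closest_point S a = y"
proof -
  have cv: "convex S" by (rule subspace_imp_convex[OF S])
  have cl: "closed S" by (rule closed_subspace[OF S])
  have "\<forall>z\<in>S. dist a y \<le> dist a z"
  proof
    fix z assume z: "z \<in> S"
    have yz: "y - z \<in> S" using y z S by (simp add: subspace_diff)
    have az: "(a - y) + (y - z) = a - z" by simp
    have "inner ((a - y) + (y - z)) ((a - y) + (y - z)) = inner (a - y) (a - y) + inner (y - z) (y - z) + 2 * inner (a - y) (y - z)"
      unfolding inner_add_left inner_add_right inner_commute[of "y - z" "a - y"] by linarith
    then have "inner (a - z) (a - z) = inner (a - y) (a - y) + inner (y - z) (y - z) + 2 * inner (a - y) (y - z)"
      unfolding az .
    then have "inner (a - y) (a - y) \<le> inner (a - z) (a - z)" using o yz by simp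
    then show "dist a y \<le> dist a z" by (simp add: dist_norm norm_le)
  qed
  then show ?thesis using closest_point_unique[OF cv cl y] by simp
qed

lemma cp_linear:
  fixes S :: "(real^'n::finite) set"
  assumes S: "subspace S"
  shows "linear (closest_point S)"
proof (rule linearI)
  fix u v
  show "closest_point S (u + v) = closest_point S u + closest_point S v"
  proof (rule cp_unique[OF S])
    show "closest_point S u + closest_point S v \<in> S"
      using cp_in[OF S] S by (simp add: subspace_add)
    show "\<forall>x\<in>S. inner (u + v - (closest_point S u + closest_point S v)) x = 0"
    proof
      fix x assume x: "x \<in> S"
      have eq: "u + v - (closest_point S u + closest_point S v) = (u - closest_point S u) + (v - closest_point S v)" by simp
      show "inner (u + v - (closest_point S u + closest_point S v)) x = 0"
        unfolding eq inner_add_left using cp_orth[OF S x, of u] cp_orth[OF S x, of v] by simp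
    qed
  qed
next
  fix r and u :: "real^'n"
  show "closest_point S (r *\<^sub>R u) = r *\<^sub>R closest_point S u"
  proof (rule cp_unique[OF S])
    show "r *\<^sub>R closest_point S u \<in> S" using cp_in[OF S] S by (simp add: subspace_scale)
    show "\<forall>x\<in>S. inner (r *\<^sub>R u - r *\<^sub>R closest_point S u) x = 0"
    proof
      fix x assume x: "x \<in> S"
      have "r *\<^sub>R u - r *\<^sub>R closest_point S u = r *\<^sub>R (u - closest_point S u)" by (simp add: scaleR_diff_right)
      then show "inner (r *\<^sub>R u - r *\<^sub>R closest_point S u) x = 0"
        using cp_orth[OF S x, of u] by simp
    qed
  qed
qed

lemma cp_selfadj:
  fixes S :: "(real^'n::finite) set"
  assumes S: "subspace S"
  shows "inner w (closest_point S v) = inner (closest_point S w) (closest_point S v)"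
proof -
  have "inner (w - closest_point S w) (closest_point S v) = 0" by (rule cp_orth[OF S cp_in[OF S]])
  then show ?thesis by (simp add: inner_diff_left)
qed

lemma cp_idem:
  fixes S :: "(real^'n::finite) set"
  assumes S: "subspace S" and x: "x \<in> S"
  shows "closest_point S x = x"
  by (rule closest_point_self[OF x])

lemma sup_zero_lemma:
  fixes a C :: real
  assumes "\<And>t. t > 0 \<Longrightarrow> 2 * a \<le> t * C"
  shows "a \<le> 0"
proof (rule ccontr)
  assume "\<not> a \<le> 0"
  then have a: "a > 0" by simp
  define t where "t = a / (\<bar>C\<bar> + 1)"
  have t: "t > 0" using a by (simp add: t_def)
  have "t * C \<le> t * \<bar>C\<bar>" using t by (simp add: mult_left_mono)
  also have "\<dots> < a" using a by (simp add: t_def field_simps)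
  finally show False using assms[OF t] a by linarith
qed

locale drgs = drg G D b c for G :: "'n::finite \<Rightarrow> 'n \<Rightarrow> bool" and D b c +
  fixes \<theta> :: "nat \<Rightarrow> real"
  assumes eigs: "eigenvalues (adj_matrix G) = \<theta> ` {0..D}"
    and decr: "\<And>i j. i < j \<Longrightarrow> j \<le> D \<Longrightarrow> \<theta> i > \<theta> j"
begin

abbreviation "A \<equiv> adj_matrix G"
abbreviation "V h \<equiv> eigenspace A (\<theta> h)"
abbreviation "P h \<equiv> closest_point (V h)"

lemma A_entry: "A $ i $ j = (if G i j then 1 else 0)"
  by (simp add: adj_matrix_def)

lemma Av_comp: "(A *v v) $ x = (\<Sum>z\<in>N x. v $ z)"
proof -
  have "(A *v v) $ x = (\<Sum>z\<in>UNIV. (if G x z then v $ z else 0))"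
    by (simp add: matrix_vector_mult_def A_entry if_distrib if_distribR cong: if_cong)
  also have "\<dots> = (\<Sum>z\<in>{z\<in>UNIV. G x z}. v $ z)" by (rule sum.inter_filter[symmetric]) simp
  finally show ?thesis by simp
qed

lemma A_sym: "A $ i $ j = A $ j $ i"
  using symG by (auto simp: A_entry)

lemma A_sym_inner: "inner (A *v u) v = inner u (A *v v)"
proof -
  have "inner (A *v u) v = (\<Sum>i\<in>UNIV. \<Sum>j\<in>UNIV. A $ i $ j * u $ j * v $ i)"
    by (simp add: inner_vec_def matrix_vector_mult_def sum_distrib_right)
  also have "\<dots> = (\<Sum>j\<in>UNIV. \<Sum>i\<in>UNIV. A $ i $ j * u $ j * v $ i)" by (rule sum.swap)
  also have "\<dots> = inner u (A *v v)"
    by (simp add: inner_vec_def matrix_vector_mult_def sum_distrib_left A_sym[of _ "_"] mult_ac)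
  finally show ?thesis .
qed

lemma subV: "subspace (V h)" by (rule subspace_eigenspace)

lemma V_eig: "u \<in> V h \<Longrightarrow> A *v u = \<theta> h *\<^sub>R u"
  by (simp add: eigenspace_def)

lemma P_in: "P h v \<in> V h" by (rule cp_in[OF subV])

lemma AP: "A *v P h v = \<theta> h *\<^sub>R P h v" by (rule V_eig[OF P_in])

lemma eig_orth:
  assumes u: "u \<in> V h" and v: "v \<in> V j" and ne: "\<theta> h \<noteq> \<theta> j"
  shows "inner u v = 0"
proof -
  have "\<theta> h * inner u v = inner (A *v u) v" using V_eig[OF u] by simp
  also have "\<dots> = inner u (A *v v)" by (rule A_sym_inner)
  also have "\<dots> = \<theta> j * inner u v" using V_eig[OF v] by simp
  finally show ?thesis using ne by simp
qed

lemma theta_inj: "h \<le> D \<Longrightarrow> j \<le> D \<Longrightarrow> \<theta> h = \<theta> j \<Longrightarrow> h = j"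
  using decr by (metis less_irrefl nat_neq_iff)

definition "W = {w. \<forall>h\<in>{0..D}. \<forall>e\<in>V h. inner w e = 0}"

lemma subW: "subspace W"
  unfolding subspace_def W_def by (simp add: inner_add_left)

lemma W_inv: "w \<in> W \<Longrightarrow> A *v w \<in> W"
  unfolding W_def using A_sym_inner V_eig by simp

lemma W_zero: "w \<in> W \<Longrightarrow> w = 0"
proof (rule ccontr)
  assume w0: "w \<in> W" "w \<noteq> 0"
  define K where "K = sphere 0 1 \<inter> W"
  have cK: "compact K" unfolding K_def
    by (rule compact_Int_closed[OF compact_sphere closed_subspace[OF subW]])
  have "(1 / norm w) *\<^sub>R w \<in> K" unfolding K_def using w0 subW
    by (simp add: subspace_scale)
  then have neK: "K \<noteq> {}" by blast
  have ctK: "continuous_on K (\<lambda>u. inner u (A *v u))"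
    by (intro continuous_intros)
  obtain q where q: "q \<in> K" "\<And>u. u \<in> K \<Longrightarrow> inner u (A *v u) \<le> inner q (A *v q)"
    using continuous_attains_sup[OF cK neK ctK] by blast
  define l where "l = inner q (A *v q)"
  have qW: "q \<in> W" and nq: "norm q = 1" using q(1) unfolding K_def by auto
  have qq: "inner q q = 1" using nq by (simp add: power2_norm_eq_inner[symmetric])
  have Q: "inner u (A *v u) \<le> l * inner u u" if u: "u \<in> W" for u
  proof (cases "u = 0")
    case True then show ?thesis by simp
  next
    case False
    let ?u = "(1 / norm u) *\<^sub>R u"
    have "?u \<in> K" unfolding K_def using u False subW by (simp add: subspace_scale)
    then have "inner ?u (A *v ?u) \<le> l" using q(2) l_def by blast
    then have "(1 / norm u)^2 * inner u (A *v u) \<le> l"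
      by (simp add: matrix_vector_mult_scaleR power2_eq_square)
    moreover have "norm u ^ 2 = inner u u" by (simp add: power2_norm_eq_inner)
    moreover have "norm u > 0" using False by simp
    ultimately show ?thesis by (simp add: field_simps)
  qed
  define r where "r = A *v q - l *\<^sub>R q"
  have rW: "r \<in> W" unfolding r_def using W_inv[OF qW] qW subW by (simp add: subspace_diff subspace_scale)
  have Aq: "A *v q = r + l *\<^sub>R q" unfolding r_def by simp
  have rq: "inner r q = 0"
  proof -
    have "inner r q = inner (A *v q) q - l * inner q q" by (simp add: r_def inner_diff_left)
    also have "inner (A *v q) q = l" unfolding l_def by (rule inner_commute)
    finally show ?thesis using qq by simp
  qed
  have key: "2 * inner r r \<le> t * (l * inner r r - inner r (A *v r))" if t: "t > 0" for t
  proof -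
    have uW: "q + t *\<^sub>R r \<in> W" using qW rW subW by (simp add: subspace_add subspace_scale)
    have e1: "inner (q + t *\<^sub>R r) (A *v (q + t *\<^sub>R r)) = l + 2 * t * inner r r + t^2 * inner r (A *v r)"
    proof -
      have "inner q (A *v r) = inner (A *v q) r" by (simp add: A_sym_inner)
      also have "\<dots> = inner r (A *v q)" by (rule inner_commute)
      also have "\<dots> = inner r r" using Aq rq by (simp add: inner_add_right)
      finally have a: "inner q (A *v r) = inner r r" .
      have b: "inner r (A *v q) = inner r r" using Aq rq by (simp add: inner_add_right)
      show ?thesis using a b l_def
        by (simp add: matrix_vector_right_distrib matrix_vector_mult_scaleR inner_add_left
            inner_add_right power2_eq_square algebra_simps)
    qed
    have e2: "inner (q + t *\<^sub>R r) (q + t *\<^sub>R r) = 1 + t^2 * inner r r"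
      using qq rq by (simp add: inner_add_left inner_add_right inner_commute power2_eq_square algebra_simps)
    from Q[OF uW] e1 e2 have "l + 2 * t * inner r r + t^2 * inner r (A *v r) \<le> l * (1 + t^2 * inner r r)"
      by simp
    then have "t * (2 * inner r r) \<le> t * (t * (l * inner r r - inner r (A *v r)))"
      by (simp add: power2_eq_square algebra_simps)
    then show ?thesis using t by simp
  qed
  have "inner r r \<le> 0" by (rule sup_zero_lemma[OF key])
  then have "inner r r = 0" using inner_ge_zero[of r] by linarith
  then have "r = 0" by simp
  then have Aq': "A *v q = l *\<^sub>R q" using Aq by simp
  have "q \<noteq> 0" using nq by auto
  then have "l \<in> eigenvalues A" unfolding eigenvalues_def using Aq' by blast
  then obtain h where h: "h \<in> {0..D}" "l = \<theta> h" using eigs by blast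
  have "q \<in> V h" using Aq' h by (simp add: eigenspace_def)
  then have "inner q q = 0" using qW h unfolding W_def by blast
  then show False using qq by simp
qed

lemma decomp: "v = (\<Sum>h\<in>{0..D}. P h v)"
proof -
  have "v - (\<Sum>h\<in>{0..D}. P h v) \<in> W"
    unfolding W_def
  proof (intro CollectI ballI)
    fix j e assume j: "j \<in> {0..D}" and e: "e \<in> V j"
    have "(\<Sum>h\<in>{0..D}. inner (P h v) e) = inner (P j v) e + (\<Sum>h\<in>{0..D} - {j}. inner (P h v) e)"
      using j by (simp add: sum.remove)
    also have "(\<Sum>h\<in>{0..D} - {j}. inner (P h v) e) = 0"
    proof (rule sum.neutral, rule ballI)
      fix h assume h: "h \<in> {0..D} - {j}"
      then have "\<theta> h \<noteq> \<theta> j" using theta_inj j by auto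
      then show "inner (P h v) e = 0" by (rule eig_orth[OF P_in e])
    qed
    finally have s: "(\<Sum>h\<in>{0..D}. inner (P h v) e) = inner (P j v) e" by simp
    have "inner (v - (\<Sum>h\<in>{0..D}. P h v)) e = inner v e - inner (P j v) e"
      by (simp add: inner_diff_left inner_sum_left s)
    also have "\<dots> = inner (v - P j v) e" by (simp add: inner_diff_left)
    also have "\<dots> = 0" by (rule cp_orth[OF subV e])
    finally show "inner (v - (\<Sum>h\<in>{0..D}. P h v)) e = 0" .
  qed
  from W_zero[OF this] show ?thesis by simp
qed

end


lemma mv_sum: "(M::real^'n::finite^'m::finite) *v (\<Sum>h\<in>S. g h) = (\<Sum>h\<in>S. M *v g h)"
  by (induction S rule: infinite_finite_induct) (simp_all add: matrix_vector_right_distrib)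

primrec Rmat :: "real^'n::finite^'n \<Rightarrow> (nat \<Rightarrow> real) \<Rightarrow> nat \<Rightarrow> real^'n^'n" where
  "Rmat M th 0 = mat 1"
| "Rmat M th (Suc m) = M ** Rmat M th m - th m *\<^sub>R Rmat M th m"

context drgs begin

abbreviation "Ei h \<equiv> min_idem A (\<theta> h)"

lemma Ei_mult: "Ei h *v v = P h v"
proof -
  have "(\<lambda>x. matrix (P h) *v x) = P h" by (rule matrix_vector_mul(2)[OF cp_linear[OF subV]])
  then show ?thesis unfolding min_idem_def by metis
qed

lemma Ei_entry: "Ei h $ i $ j = P h (axis j 1) $ i"
  by (simp add: min_idem_def matrix_def)

lemma A_one: "A *v vec 1 = real (b 0) *\<^sub>R vec 1"
  by (simp add: vec_eq_iff Av_comp deg)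

lemma eig_le_k:
  assumes "l \<in> eigenvalues A" shows "l \<le> real (b 0)"
proof -
  obtain v where v: "v \<noteq> 0" "A *v v = l *\<^sub>R v" using assms unfolding eigenvalues_def by blast
  define m where "m = Max (range (\<lambda>y. \<bar>v $ y\<bar>))"
  have fin: "finite (range (\<lambda>y. \<bar>v $ y\<bar>))" by simp
  have mge: "\<bar>v $ y\<bar> \<le> m" for y unfolding m_def by (rule Max_ge[OF fin]) simp
  have "m \<in> range (\<lambda>y. \<bar>v $ y\<bar>)" unfolding m_def by (rule Max_in[OF fin]) simp
  then obtain x where x: "\<bar>v $ x\<bar> = m" by auto
  have mpos: "m > 0"
  proof (rule ccontr)
    assume "\<not> m > 0"
    then have "\<forall>y. v $ y = 0"
    proof (intro allI)
      fix y
      have "\<bar>v $ y\<bar> \<le> 0" using mge[of y] \<open>\<not> m > 0\<close> by linarith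
      then show "v $ y = 0" by simp
    qed
    then have "v = 0" by (simp add: vec_eq_iff)
    then show False using v by simp
  qed
  have "(A *v v) $ x = l * v $ x" using v(2) by simp
  then have "l * v $ x = (\<Sum>z\<in>N x. v $ z)" using Av_comp[of v x] by simp
  then have "\<bar>l * v $ x\<bar> = \<bar>\<Sum>z\<in>N x. v $ z\<bar>" by simp
  then have "\<bar>l\<bar> * m = \<bar>\<Sum>z\<in>N x. v $ z\<bar>" using x by (simp add: abs_mult)
  also have "\<dots> \<le> (\<Sum>z\<in>N x. \<bar>v $ z\<bar>)" by (rule sum_abs)
  also have "\<dots> \<le> (\<Sum>z\<in>N x. m)" by (rule sum_mono) (rule mge)
  also have "\<dots> = real (b 0) * m" using deg[of x] by simp
  finally have "\<bar>l\<bar> * m \<le> real (b 0) * m" .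
  then have "\<bar>l\<bar> \<le> real (b 0)" using mpos by simp
  then show ?thesis by simp
qed

lemma theta0: "\<theta> 0 = real (b 0)"
proof -
  have "vec 1 \<noteq> (0::real^'n)" by (simp add: vec_eq_iff)
  then have "real (b 0) \<in> eigenvalues A" unfolding eigenvalues_def using A_one by blast
  then obtain i where i: "i \<in> {0..D}" "real (b 0) = \<theta> i" using eigs by blast
  have "\<theta> i \<le> \<theta> 0"
  proof (cases "i = 0")
    case False then show ?thesis using decr[of 0 i] i(1) by simp
  qed simp
  moreover have "\<theta> 0 \<in> eigenvalues A" using eigs by simp
  ultimately show ?thesis using eig_le_k[of "\<theta> 0"] i(2) by linarith
qed

lemma A_mult_entry: "(A ** X) $ x $ y = (\<Sum>z\<in>N x. X $ z $ y)"
proof -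
  have "(A ** X) $ x $ y = (\<Sum>z\<in>UNIV. (if G x z then X $ z $ y else 0))"
    by (simp add: matrix_matrix_mult_def A_entry if_distrib if_distribR cong: if_cong)
  also have "\<dots> = (\<Sum>z\<in>{z\<in>UNIV. G x z}. X $ z $ y)" by (rule sum.inter_filter[symmetric]) simp
  finally show ?thesis by simp
qed

definition distfun :: "real^'n^'n \<Rightarrow> bool" where "distfun X \<longleftrightarrow> (\<exists>f. \<forall>x y. X $ x $ y = f (d x y))"

lemma GL': "(\<Sum>z\<in>N x. g (d z y)) = real (c (d x y)) * g (d x y - 1)
     + (real (b 0) - real (b (d x y)) - real (c (d x y))) * g (d x y) + real (b (d x y)) * g (d x y + 1)"
proof -
  have "(\<Sum>z\<in>N x. g (d z y)) = (\<Sum>z\<in>N x. g (d y z))" by (simp add: d_sym)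
  moreover have "d y x = d x y" by (rule d_sym)
  note GL[OF this, of g]
  ultimately show ?thesis by simp
qed

lemma distfun_mult: "distfun X \<Longrightarrow> distfun (A ** X)"
proof -
  assume "distfun X"
  then obtain f where f: "\<And>x y. X $ x $ y = f (d x y)" unfolding distfun_def by blast
  define F where "F j = real (c j) * f (j - 1) + (real (b 0) - real (b j) - real (c j)) * f j + real (b j) * f (j + 1)" for j
  have "(A ** X) $ x $ y = F (d x y)" for x y
    unfolding A_mult_entry f F_def by (rule GL')
  then show ?thesis unfolding distfun_def by blast
qed

lemma distfun_I: "distfun (mat 1)"
proof -
  have "(mat 1 :: real^'n^'n) $ x $ y = (if d x y = 0 then 1 else 0)" for x y
    by (simp add: mat_def d_0)
  then show ?thesis unfolding distfun_def by (intro exI[of _ "\<lambda>j. if j = 0 then 1 else 0"]) simp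
qed

lemma distfun_diff: "distfun X \<Longrightarrow> distfun Y \<Longrightarrow> distfun (X - Y)"
proof -
  assume "distfun X" "distfun Y"
  then obtain f g where "\<And>x y. X $ x $ y = f (d x y)" "\<And>x y. Y $ x $ y = g (d x y)"
    unfolding distfun_def by blast
  then have "(X - Y) $ x $ y = f (d x y) - g (d x y)" for x y by simp
  then show ?thesis unfolding distfun_def by (intro exI[of _ "\<lambda>j. f j - g j"]) simp
qed

lemma distfun_scale: "distfun X \<Longrightarrow> distfun (r *\<^sub>R X)"
proof -
  assume "distfun X"
  then obtain f where "\<And>x y. X $ x $ y = f (d x y)" unfolding distfun_def by blast
  then have "(r *\<^sub>R X) $ x $ y = r * f (d x y)" for x y by simp
  then show ?thesis unfolding distfun_def by (intro exI[of _ "\<lambda>j. r * f j"]) simp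
qed

lemma distfun_R: "distfun (Rmat A \<theta> m)"
  by (induction m) (simp_all add: distfun_I distfun_diff distfun_mult distfun_scale)

lemma R_apply: "Rmat A \<theta> m *v v = (\<Sum>h\<in>{0..D}. (\<Prod>j<m. \<theta> h - \<theta> j) *\<^sub>R P h v)"
proof (induction m)
  case 0
  then show ?case using decomp[of v] by simp
next
  case (Suc m)
  have "Rmat A \<theta> (Suc m) *v v = A *v (Rmat A \<theta> m *v v) - \<theta> m *\<^sub>R (Rmat A \<theta> m *v v)"
    by (simp add: matrix_vector_mult_diff_rdistrib matrix_vector_mul_assoc scaleR_matrix_vector_assoc)
  also have "\<dots> = (\<Sum>h\<in>{0..D}. (\<Prod>j<m. \<theta> h - \<theta> j) *\<^sub>R (\<theta> h *\<^sub>R P h v))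
                 - (\<Sum>h\<in>{0..D}. \<theta> m *\<^sub>R ((\<Prod>j<m. \<theta> h - \<theta> j) *\<^sub>R P h v))"
    unfolding Suc.IH mv_sum by (simp add: matrix_vector_mult_scaleR AP scaleR_right.sum)
  also have "\<dots> = (\<Sum>h\<in>{0..D}. (\<Prod>j<Suc m. \<theta> h - \<theta> j) *\<^sub>R P h v)"
    unfolding sum_subtractf[symmetric]
  proof (rule sum.cong)
    fix h
    show "(\<Prod>j<m. \<theta> h - \<theta> j) *\<^sub>R \<theta> h *\<^sub>R P h v - \<theta> m *\<^sub>R (\<Prod>j<m. \<theta> h - \<theta> j) *\<^sub>R P h v
        = (\<Prod>j<Suc m. \<theta> h - \<theta> j) *\<^sub>R P h v"
      by (simp add: algebra_simps)
  qed simp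
  finally show ?case .
qed

definition "cD = (\<Prod>j<D. \<theta> D - \<theta> j)"

lemma cD_nz: "cD \<noteq> 0"
proof -
  have "\<forall>j\<in>{..<D}. \<theta> D - \<theta> j \<noteq> 0"
  proof
    fix j assume "j \<in> {..<D}"
    then have "\<theta> j > \<theta> D" using decr[of j D] by simp
    then show "\<theta> D - \<theta> j \<noteq> 0" by simp
  qed
  then show ?thesis unfolding cD_def by (simp add: prod_zero_iff)
qed

lemma R_D: "Rmat A \<theta> D *v v = cD *\<^sub>R P D v"
proof -
  have "Rmat A \<theta> D *v v = (\<Prod>j<D. \<theta> D - \<theta> j) *\<^sub>R P D v
        + (\<Sum>h\<in>{0..D} - {D}. (\<Prod>j<D. \<theta> h - \<theta> j) *\<^sub>R P h v)"
    unfolding R_apply by (rule sum.remove) simp_all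
  also have "(\<Sum>h\<in>{0..D} - {D}. (\<Prod>j<D. \<theta> h - \<theta> j) *\<^sub>R P h v) = 0"
  proof (rule sum.neutral, rule ballI)
    fix h assume "h \<in> {0..D} - {D}"
    then have "h < D" by auto
    then have "(\<Prod>j<D. \<theta> h - \<theta> j) = 0"
      by (intro prod_zero) (simp, rule bexI[of _ h], simp_all)
    then show "(\<Prod>j<D. \<theta> h - \<theta> j) *\<^sub>R P h v = 0" by simp
  qed
  finally show ?thesis unfolding cD_def by simp
qed

lemma ED_R: "Ei D = (1 / cD) *\<^sub>R Rmat A \<theta> D"
  unfolding matrix_eq
  by (simp add: Ei_mult scaleR_matrix_vector_assoc[symmetric] R_D cD_nz)

lemma distfun_ED: "distfun (Ei D)"
  unfolding ED_R by (rule distfun_scale[OF distfun_R])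

end


context drgs begin

definition scal :: "real^'n^'n \<Rightarrow> bool" where
  "scal X \<longleftrightarrow> (\<forall>h\<in>{0..D}. \<exists>l. \<forall>u\<in>V h. X *v u = l *\<^sub>R u)"

lemma scal_I: "scal (mat 1)"
  unfolding scal_def by (intro ballI exI[of _ 1]) simp

lemma scal_mult: "scal X \<Longrightarrow> scal (A ** X)"
  unfolding scal_def
proof (intro ballI)
  fix h assume "\<forall>h\<in>{0..D}. \<exists>l. \<forall>u\<in>V h. X *v u = l *\<^sub>R u" and h: "h \<in> {0..D}"
  then obtain l where l: "\<forall>u\<in>V h. X *v u = l *\<^sub>R u" by blast
  have "\<forall>u\<in>V h. (A ** X) *v u = (l * \<theta> h) *\<^sub>R u"
    using l V_eig by (simp add: matrix_vector_mul_assoc[symmetric] matrix_vector_mult_scaleR)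
  then show "\<exists>l. \<forall>u\<in>V h. (A ** X) *v u = l *\<^sub>R u" by blast
qed

lemma scal_A: "scal A"
  using scal_mult[OF scal_I] by simp

lemma scal_add: "scal X \<Longrightarrow> scal Y \<Longrightarrow> scal (X + Y)"
  unfolding scal_def
proof (intro ballI)
  fix h assume X: "\<forall>h\<in>{0..D}. \<exists>l. \<forall>u\<in>V h. X *v u = l *\<^sub>R u"
    and Y: "\<forall>h\<in>{0..D}. \<exists>l. \<forall>u\<in>V h. Y *v u = l *\<^sub>R u" and h: "h \<in> {0..D}"
  from X h obtain l where l: "\<forall>u\<in>V h. X *v u = l *\<^sub>R u" by blast
  from Y h obtain m where m: "\<forall>u\<in>V h. Y *v u = m *\<^sub>R u" by blast
  have "\<forall>u\<in>V h. (X + Y) *v u = (l + m) *\<^sub>R u"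
    using l m by (simp add: matrix_vector_mult_add_rdistrib scaleR_add_left)
  then show "\<exists>l. \<forall>u\<in>V h. (X + Y) *v u = l *\<^sub>R u" by blast
qed

lemma scal_scale: "scal X \<Longrightarrow> scal (r *\<^sub>R X)"
  unfolding scal_def
proof (intro ballI)
  fix h assume X: "\<forall>h\<in>{0..D}. \<exists>l. \<forall>u\<in>V h. X *v u = l *\<^sub>R u" and h: "h \<in> {0..D}"
  from X h obtain l where l: "\<forall>u\<in>V h. X *v u = l *\<^sub>R u" by blast
  have "\<forall>u\<in>V h. (r *\<^sub>R X) *v u = (r * l) *\<^sub>R u"
    using l by (simp add: scaleR_matrix_vector_assoc[symmetric])
  then show "\<exists>l. \<forall>u\<in>V h. (r *\<^sub>R X) *v u = l *\<^sub>R u" by blast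
qed

lemma scal_diff: "scal X \<Longrightarrow> scal Y \<Longrightarrow> scal (X - Y)"
  using scal_add[of X "(-1) *\<^sub>R Y"] scal_scale[of Y "-1"] by simp

lemma scal_sum: "(\<And>i. i \<in> S \<Longrightarrow> scal (F i)) \<Longrightarrow> scal (\<Sum>i\<in>S. F i)"
proof (induction S rule: infinite_finite_induct)
  case (infinite S) then show ?case using scal_scale[OF scal_I, of 0] by simp
next
  case empty then show ?case using scal_scale[OF scal_I, of 0] by simp
next
  case (insert x F) then show ?case by (simp add: scal_add)
qed

definition Adist :: "nat \<Rightarrow> real^'n^'n" where
  "Adist i = (\<chi> x y. if d x y = i then 1 else 0)"

lemma d1_iff: "d x y = 1 \<longleftrightarrow> G x y"
proof
  assume "d x y = 1"
  then have "walk G 1 x y" using d_walk[of x y] by simp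
  then show "G x y" by simp
qed (rule d_adj)

lemma Adist0: "Adist 0 = mat 1"
  by (simp add: Adist_def mat_def vec_eq_iff d_0)

lemma Adist1: "Adist 1 = A"
  using d1_iff by (simp add: Adist_def vec_eq_iff A_entry)

lemma Adist1': "Adist (Suc 0) = A"
  using Adist1 by simp

lemma Adist_entry: "(A ** Adist i) $ x $ y =
   real (c (d x y)) * (if d x y - 1 = i then 1 else 0)
   + (real (b 0) - real (b (d x y)) - real (c (d x y))) * (if d x y = i then 1 else 0)
   + real (b (d x y)) * (if d x y + 1 = i then 1 else 0)"
proof -
  define g :: "nat \<Rightarrow> real" where "g j = (if j = i then 1 else 0)" for j
  have "(A ** Adist i) $ x $ y = (\<Sum>z\<in>N x. g (d z y))"
    unfolding A_mult_entry by (simp add: Adist_def g_def)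
  moreover note GL'[where x=x and g=g and y=y]
  ultimately show ?thesis by (simp add: g_def)
qed

lemma Adist_rec:
  assumes i1: "1 \<le> i" and iD: "i + 1 \<le> D"
  shows "Adist (i + 1) = (1 / real (c (i + 1))) *\<^sub>R
     (A ** Adist i - (real (b 0) - real (b i) - real (c i)) *\<^sub>R Adist i - real (b (i - 1)) *\<^sub>R Adist (i - 1))"
proof -
  have cne: "real (c (i + 1)) \<noteq> 0" using c_pos[of "i+1"] iD by simp
  show ?thesis
  proof (subst vec_eq_iff, intro allI, subst vec_eq_iff, intro allI)
    fix x y
    define j where "j = d x y"
    have e: "(A ** Adist i) $ x $ y =
      real (c j) * (if j - 1 = i then 1 else 0)
      + (real (b 0) - real (b j) - real (c j)) * (if j = i then 1 else 0)
      + real (b j) * (if j + 1 = i then 1 else 0)" unfolding j_def by (rule Adist_entry)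
    have ad: "Adist k $ x $ y = (if j = k then 1 else 0)" for k by (simp add: Adist_def j_def)
    consider "j = i + 1" | "j = i" | "j + 1 = i" | "j \<noteq> i + 1" "j \<noteq> i" "j + 1 \<noteq> i" by blast
    then show "Adist (i + 1) $ x $ y = ((1 / real (c (i + 1))) *\<^sub>R
     (A ** Adist i - (real (b 0) - real (b i) - real (c i)) *\<^sub>R Adist i - real (b (i - 1)) *\<^sub>R Adist (i - 1))) $ x $ y"
    proof cases
      case 1 then show ?thesis using cne i1 by (simp add: e ad)
    next
      case 2
      have "i \<noteq> i - 1" "i - 1 \<noteq> i" using i1 by auto
      with 2 show ?thesis using cne i1 by (simp add: e ad)
    next
      case 3 then have "j = i - 1" by simp
      with 3 show ?thesis using cne i1 by (simp add: e ad) arith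
    next
      case 4
      then have "j - 1 \<noteq> i" "j \<noteq> i - 1" using i1 by auto
      with 4 show ?thesis using cne i1 by (simp add: e ad)
    qed
  qed
qed

lemma scal_Adist_aux: "i + 1 \<le> D \<Longrightarrow> scal (Adist i) \<and> scal (Adist (i + 1))"
proof (induction i)
  case 0 then show ?case by (simp add: Adist0 Adist1' scal_I scal_A)
next
  case (Suc i)
  then have IH: "scal (Adist i)" "scal (Adist (i + 1))" by simp_all
  have "Adist (Suc i + 1) = (1 / real (c (Suc i + 1))) *\<^sub>R
     (A ** Adist (Suc i) - (real (b 0) - real (b (Suc i)) - real (c (Suc i))) *\<^sub>R Adist (Suc i)
       - real (b (Suc i - 1)) *\<^sub>R Adist (Suc i - 1))"
    by (rule Adist_rec) (use Suc.prems in simp_all)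
  moreover have "scal \<dots>" using IH
    by (simp add: scal_scale scal_diff scal_mult)
  ultimately show ?case using IH by simp
qed

lemma scal_Adist: "i \<le> D \<Longrightarrow> scal (Adist i)"
proof (cases i)
  case 0 then show ?thesis by (simp add: Adist0 scal_I)
next
  case (Suc m)
  assume "i \<le> D"
  then show ?thesis using scal_Adist_aux[of m] Suc by simp
qed

lemma distfun_scal: "distfun X \<Longrightarrow> scal X"
proof -
  assume "distfun X"
  then obtain f where f: "\<And>x y. X $ x $ y = f (d x y)" unfolding distfun_def by blast
  have "X = (\<Sum>i\<in>{0..D}. f i *\<^sub>R Adist i)"
  proof (subst vec_eq_iff, intro allI, subst vec_eq_iff, intro allI)
    fix x y
    have "(\<Sum>i\<in>{0..D}. f i *\<^sub>R Adist i) $ x $ y = (\<Sum>i\<in>{0..D}. f i * (if d x y = i then 1 else 0))"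
      by (simp add: Adist_def)
    also have "\<dots> = (\<Sum>i\<in>{0..D}. if d x y = i then f i else 0)" by (rule sum.cong) simp_all
    also have "\<dots> = f (d x y)" using diam[of x y] by (simp add: sum.delta)
    finally show "X $ x $ y = (\<Sum>i\<in>{0..D}. f i *\<^sub>R Adist i) $ x $ y" using f by simp
  qed
  also have "scal \<dots>" by (rule scal_sum) (simp add: scal_scale scal_Adist)
  finally show ?thesis .
qed

end


context drgs begin

abbreviation "ED \<equiv> Ei D"
abbreviation "k \<equiv> real (b 0)"

definition fD :: "nat \<Rightarrow> real" where
  "fD = (SOME f. \<forall>x y. ED $ x $ y = f (d x y))"

lemma fD: "ED $ x $ y = fD (d x y)"
proof -
  have "\<exists>f. \<forall>x y. ED $ x $ y = f (d x y)" using distfun_ED unfolding distfun_def .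
  then have "\<forall>x y. ED $ x $ y = fD (d x y)" unfolding fD_def by (rule someI_ex)
  then show ?thesis by blast
qed

lemma d_self: "d x x = 0" using d_0 by simp

lemma ED_sym: "ED $ x $ y = ED $ y $ x"
  by (simp add: fD d_sym)

lemma ED_gram: "(\<Sum>l\<in>UNIV. ED $ l $ i * ED $ l $ j) = ED $ i $ j"
proof -
  have "(\<Sum>l\<in>UNIV. ED $ l $ i * ED $ l $ j) = inner (P D (axis i 1)) (P D (axis j 1))"
    by (simp add: Ei_entry inner_vec_def)
  also have "\<dots> = inner (axis i 1) (P D (axis j 1))" by (rule cp_selfadj[OF subV, symmetric])
  also have "\<dots> = ED $ i $ j" by (simp add: inner_axis' Ei_entry)
  finally show ?thesis .
qed

lemma ED_diag: "ED $ x $ x = inner (P D (axis x 1)) (P D (axis x 1))"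
  using ED_gram[of x x] by (simp add: Ei_entry inner_vec_def)

lemma AED: "A ** ED = \<theta> D *\<^sub>R ED"
  unfolding matrix_eq
  by (simp add: matrix_vector_mul_assoc[symmetric] Ei_mult AP scaleR_matrix_vector_assoc[symmetric])

lemma AED_entry: "(\<Sum>z\<in>N x. fD (d z y)) = \<theta> D * fD (d x y)"
proof -
  have "(A ** ED) $ x $ y = \<theta> D * ED $ x $ y" using AED by simp
  then show ?thesis by (simp add: A_mult_entry fD)
qed

lemma rec0: "k * fD 1 = \<theta> D * fD 0"
proof -
  obtain x :: 'n where True by simp
  have "(\<Sum>z\<in>N x. fD (d z x)) = \<theta> D * fD 0" using AED_entry[where x=x and y=x] d_self by simp
  moreover note GL'[where x=x and g=fD and y=x]
  ultimately show ?thesis using d_self c0 by simp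
qed

lemma rec1: "real (c 1) * fD 0 + (k - real (b 1) - real (c 1)) * fD 1 + real (b 1) * fD 2 = \<theta> D * fD 1"
proof -
  obtain x y where xy: "d x y = 1" using pair_ex[of 1] D2 by auto
  have "(\<Sum>z\<in>N x. fD (d z y)) = \<theta> D * fD 1" using AED_entry[where x=x and y=y] xy by simp
  moreover note GL'[where x=x and g=fD and y=y]
  ultimately show ?thesis using xy by (simp add: numeral_2_eq_2)
qed

lemma thetaD_eig: "\<theta> D \<in> eigenvalues A" using eigs by simp

lemma f0_pos: "fD 0 > 0"
proof -
  have ge: "fD 0 \<ge> 0" using ED_diag[of x] fD[of x x] d_self by simp
  have "fD 0 \<noteq> 0"
  proof
    assume f0: "fD 0 = 0"
    have "P D (axis x 1) = 0" for x
    proof -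
      have "inner (P D (axis x 1)) (P D (axis x 1)) = 0" using ED_diag[of x] fD[of x x] d_self f0 by simp
      then show ?thesis by simp
    qed
    then have "ED = 0" by (simp add: vec_eq_iff Ei_entry)
    obtain v where v: "v \<noteq> 0" "A *v v = \<theta> D *\<^sub>R v" using thetaD_eig unfolding eigenvalues_def by blast
    have "v \<in> V D" using v(2) by (simp add: eigenspace_def)
    then have "P D v = v" by (rule closest_point_self)
    then have "ED *v v = v" by (simp add: Ei_mult)
    then show False using \<open>ED = 0\<close> v(1) by simp
  qed
  then show ?thesis using ge by simp
qed

end


lemma sum4_swap:
  "(\<Sum>p\<in>P. \<Sum>q\<in>Q. \<Sum>i\<in>I. \<Sum>j\<in>J. F p q i j) = (\<Sum>i\<in>I. \<Sum>j\<in>J. \<Sum>p\<in>P. \<Sum>q\<in>Q. F p q i j)"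
proof -
  have "(\<Sum>p\<in>P. \<Sum>q\<in>Q. \<Sum>i\<in>I. \<Sum>j\<in>J. F p q i j) = (\<Sum>p\<in>P. \<Sum>i\<in>I. \<Sum>q\<in>Q. \<Sum>j\<in>J. F p q i j)"
    by (rule sum.cong[OF refl], rule sum.swap)
  also have "\<dots> = (\<Sum>i\<in>I. \<Sum>p\<in>P. \<Sum>q\<in>Q. \<Sum>j\<in>J. F p q i j)" by (rule sum.swap)
  also have "\<dots> = (\<Sum>i\<in>I. \<Sum>p\<in>P. \<Sum>j\<in>J. \<Sum>q\<in>Q. F p q i j)"
    by (rule sum.cong[OF refl], rule sum.cong[OF refl], rule sum.swap)
  also have "\<dots> = (\<Sum>i\<in>I. \<Sum>j\<in>J. \<Sum>p\<in>P. \<Sum>q\<in>Q. F p q i j)"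
    by (rule sum.cong[OF refl], rule sum.swap)
  finally show ?thesis .
qed

context drgs begin

definition M :: "real^'n^'n" where "M = hadamard ED ED"
definition wv :: "'n \<Rightarrow> 'n \<Rightarrow> real^'n" where "wv p q = (\<chi> i. ED $ p $ i * ED $ q $ i)"
definition pA :: "real^'n^'n" where "pA = A ** A - (\<theta> 1 + k) *\<^sub>R A + (\<theta> 1 * k) *\<^sub>R mat 1"
definition pp :: "real \<Rightarrow> real" where "pp t = (t - \<theta> 1) * (t - k)"
definition S :: real where "S = (\<Sum>p\<in>UNIV. \<Sum>q\<in>UNIV. inner (wv p q) (pA *v wv p q))"

lemma M_entry: "M $ i $ j = (fD (d i j))^2"
  by (simp add: M_def hadamard_def fD power2_eq_square)

lemma M_sym: "M $ i $ j = M $ j $ i"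
  by (simp add: M_entry d_sym)

lemma M_decomp: "M $ i $ j = (\<Sum>p\<in>UNIV. \<Sum>q\<in>UNIV. wv p q $ i * wv p q $ j)"
proof -
  have "M $ i $ j = ED $ i $ j * ED $ i $ j" by (simp add: M_def hadamard_def)
  also have "\<dots> = (\<Sum>p\<in>UNIV. ED $ p $ i * ED $ p $ j) * (\<Sum>q\<in>UNIV. ED $ q $ i * ED $ q $ j)"
    by (simp add: ED_gram)
  also have "\<dots> = (\<Sum>p\<in>UNIV. \<Sum>q\<in>UNIV. (ED $ p $ i * ED $ p $ j) * (ED $ q $ i * ED $ q $ j))"
    by (rule sum_product)
  also have "\<dots> = (\<Sum>p\<in>UNIV. \<Sum>q\<in>UNIV. wv p q $ i * wv p q $ j)"
    by (simp add: wv_def mult_ac)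
  finally show ?thesis .
qed

lemma M_mv: "M *v v = (\<Sum>p\<in>UNIV. \<Sum>q\<in>UNIV. inner (wv p q) v *\<^sub>R wv p q)"
proof (subst vec_eq_iff, intro allI)
  fix i
  have "(M *v v) $ i = (\<Sum>j\<in>UNIV. \<Sum>p\<in>UNIV. \<Sum>q\<in>UNIV. wv p q $ i * wv p q $ j * v $ j)"
    by (simp add: matrix_vector_mult_def M_decomp sum_distrib_right)
  also have "\<dots> = (\<Sum>p\<in>UNIV. \<Sum>j\<in>UNIV. \<Sum>q\<in>UNIV. wv p q $ i * wv p q $ j * v $ j)"
    by (rule sum.swap)
  also have "\<dots> = (\<Sum>p\<in>UNIV. \<Sum>q\<in>UNIV. \<Sum>j\<in>UNIV. wv p q $ i * wv p q $ j * v $ j)"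
    by (rule sum.cong[OF refl], rule sum.swap)
  also have "\<dots> = (\<Sum>p\<in>UNIV. \<Sum>q\<in>UNIV. inner (wv p q) v * wv p q $ i)"
    by (simp add: inner_vec_def sum_distrib_left sum_distrib_right mult_ac)
  also have "\<dots> = (\<Sum>p\<in>UNIV. \<Sum>q\<in>UNIV. inner (wv p q) v *\<^sub>R wv p q) $ i"
    by simp
  finally show "(M *v v) $ i = (\<Sum>p\<in>UNIV. \<Sum>q\<in>UNIV. inner (wv p q) v *\<^sub>R wv p q) $ i" .
qed

lemma pA_eig: "u \<in> V h \<Longrightarrow> pA *v u = pp (\<theta> h) *\<^sub>R u"
proof -
  assume u: "u \<in> V h"
  have "pA *v u = A *v (A *v u) - (\<theta> 1 + k) *\<^sub>R (A *v u) + (\<theta> 1 * k) *\<^sub>R u"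
    by (simp add: pA_def matrix_vector_mult_add_rdistrib matrix_vector_mult_diff_rdistrib
        matrix_vector_mul_assoc[symmetric] scaleR_matrix_vector_assoc[symmetric])
  also have "\<dots> = pp (\<theta> h) *\<^sub>R u"
    using V_eig[OF u] by (simp add: matrix_vector_mult_scaleR pp_def algebra_simps)
  finally show ?thesis .
qed

lemma quad: "inner w (pA *v w) = (\<Sum>h\<in>{0..D}. pp (\<theta> h) * inner (P h w) (P h w))"
proof -
  have "pA *v w = pA *v (\<Sum>h\<in>{0..D}. P h w)" using decomp[of w] by simp
  also have "\<dots> = (\<Sum>h\<in>{0..D}. pp (\<theta> h) *\<^sub>R P h w)"
    unfolding mv_sum by (simp add: pA_eig[OF P_in])
  finally have "inner w (pA *v w) = (\<Sum>h\<in>{0..D}. pp (\<theta> h) * inner w (P h w))"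
    by (simp add: inner_sum_right)
  also have "\<dots> = (\<Sum>h\<in>{0..D}. pp (\<theta> h) * inner (P h w) (P h w))"
    by (rule sum.cong[OF refl]) (subst cp_selfadj[OF subV], rule refl)
  finally show ?thesis .
qed

lemma th1_lt: "\<theta> 1 < k" using decr[of 0 1] D2 theta0 by simp

lemma pp_nonneg: "h \<le> D \<Longrightarrow> pp (\<theta> h) \<ge> 0"
proof -
  assume h: "h \<le> D"
  consider "h = 0" | "h = 1" | "h \<ge> 2" by linarith
  then show ?thesis
  proof cases
    case 1 then show ?thesis by (simp add: pp_def theta0)
  next
    case 2 then show ?thesis by (simp add: pp_def)
  next
    case 3
    then have "\<theta> h < \<theta> 1" using decr[of 1 h] h by simp
    then show ?thesis using th1_lt unfolding pp_def by (simp add: mult_nonpos_nonpos)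
  qed
qed

lemma pp_pos: "2 \<le> h \<Longrightarrow> h \<le> D \<Longrightarrow> pp (\<theta> h) > 0"
proof -
  assume h: "2 \<le> h" "h \<le> D"
  then have "\<theta> h < \<theta> 1" using decr[of 1 h] by simp
  then show ?thesis using th1_lt unfolding pp_def by (simp add: mult_neg_neg)
qed

lemma quad_nonneg: "inner w (pA *v w) \<ge> 0"
  unfolding quad by (rule sum_nonneg) (simp add: pp_nonneg)

lemma S_nonneg: "S \<ge> 0"
  unfolding S_def by (intro sum_nonneg quad_nonneg)

end


context drgs begin

lemma S_entries: "S = (\<Sum>i\<in>UNIV. \<Sum>j\<in>UNIV. pA $ i $ j * M $ i $ j)"
proof -
  have "inner w (pA *v w) = (\<Sum>i\<in>UNIV. \<Sum>j\<in>UNIV. pA $ i $ j * (w $ i * w $ j))" for w :: "real^'n"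
  proof -
    have "inner w (pA *v w) = (\<Sum>i\<in>UNIV. w $ i * (\<Sum>j\<in>UNIV. pA $ i $ j * w $ j))"
      by (simp add: inner_vec_def matrix_vector_mult_def)
    also have "\<dots> = (\<Sum>i\<in>UNIV. \<Sum>j\<in>UNIV. pA $ i $ j * (w $ i * w $ j))"
    proof (rule sum.cong[OF refl])
      fix i
      show "w $ i * (\<Sum>j\<in>UNIV. pA $ i $ j * w $ j) = (\<Sum>j\<in>UNIV. pA $ i $ j * (w $ i * w $ j))"
        unfolding sum_distrib_left by (rule sum.cong[OF refl]) (simp only: mult_ac)
    qed
    finally show ?thesis .
  qed
  then have "S = (\<Sum>p\<in>UNIV. \<Sum>q\<in>UNIV. \<Sum>i\<in>UNIV. \<Sum>j\<in>UNIV. pA $ i $ j * (wv p q $ i * wv p q $ j))"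
    unfolding S_def by simp
  also have "\<dots> = (\<Sum>i\<in>UNIV. \<Sum>j\<in>UNIV. \<Sum>p\<in>UNIV. \<Sum>q\<in>UNIV. pA $ i $ j * (wv p q $ i * wv p q $ j))"
    by (rule sum4_swap)
  also have "\<dots> = (\<Sum>i\<in>UNIV. \<Sum>j\<in>UNIV. pA $ i $ j * M $ i $ j)"
    by (simp add: M_decomp sum_distrib_left)
  finally show ?thesis .
qed

definition "T0 = real (c 1) * (fD 0)^2 + (k - real (b 1) - real (c 1)) * (fD 1)^2 + real (b 1) * (fD 2)^2"

lemma row_AA: "(\<Sum>j\<in>UNIV. (A ** A) $ i $ j * M $ i $ j) = k * T0"
proof -
  have "(\<Sum>j\<in>UNIV. (A ** A) $ i $ j * M $ i $ j) = (\<Sum>j\<in>UNIV. \<Sum>z\<in>N i. A $ z $ j * M $ i $ j)"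
    by (simp add: A_mult_entry sum_distrib_right)
  also have "\<dots> = (\<Sum>z\<in>N i. \<Sum>j\<in>UNIV. A $ z $ j * M $ i $ j)" by (rule sum.swap)
  also have "\<dots> = (\<Sum>z\<in>N i. (A *v (M $ i)) $ z)" by (simp add: matrix_vector_mult_def)
  also have "\<dots> = (\<Sum>z\<in>N i. \<Sum>j\<in>N z. M $ i $ j)" by (simp add: Av_comp)
  also have "\<dots> = (\<Sum>z\<in>N i. T0)"
  proof (rule sum.cong[OF refl])
    fix z assume "z \<in> N i"
    then have dz: "d z i = 1" using d_adj symG by (metis mem_Collect_eq)
    have "(\<Sum>j\<in>N z. M $ i $ j) = (\<Sum>j\<in>N z. (\<lambda>t. (fD t)^2) (d j i))"
      by (simp add: M_entry d_sym)
    also note GL'[where x=z and g="\<lambda>t. (fD t)^2" and y=i]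
    finally show "(\<Sum>j\<in>N z. M $ i $ j) = T0" using dz by (simp add: T0_def numeral_2_eq_2)
  qed
  also have "\<dots> = k * T0" using deg[of i] by simp
  finally show ?thesis .
qed

lemma row_A: "(\<Sum>j\<in>UNIV. A $ i $ j * M $ i $ j) = k * (fD 1)^2"
proof -
  have "(\<Sum>j\<in>UNIV. A $ i $ j * M $ i $ j) = (A *v (M $ i)) $ i" by (simp add: matrix_vector_mult_def)
  also have "\<dots> = (\<Sum>j\<in>N i. M $ i $ j)" by (simp add: Av_comp)
  also have "\<dots> = (\<Sum>j\<in>N i. (fD 1)^2)"
    by (rule sum.cong[OF refl]) (simp add: M_entry d_adj)
  also have "\<dots> = k * (fD 1)^2" using deg[of i] by simp
  finally show ?thesis .
qed

lemma S_formula: "S = real CARD('n) * k * (T0 - (\<theta> 1 + k) * (fD 1)^2 + \<theta> 1 * (fD 0)^2)"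
proof -
  have row: "(\<Sum>j\<in>UNIV. pA $ i $ j * M $ i $ j) = k * (T0 - (\<theta> 1 + k) * (fD 1)^2 + \<theta> 1 * (fD 0)^2)" for i
  proof -
    have pe: "pA $ i $ j = (A ** A) $ i $ j - (\<theta> 1 + k) * A $ i $ j + (\<theta> 1 * k) * (if i = j then 1 else 0)" for j
      by (simp add: pA_def mat_def)
    have "(\<Sum>j\<in>UNIV. pA $ i $ j * M $ i $ j) = (\<Sum>j\<in>UNIV. (A ** A) $ i $ j * M $ i $ j
          - (\<theta> 1 + k) * (A $ i $ j * M $ i $ j) + \<theta> 1 * k * (if i = j then M $ i $ j else 0))"
      by (rule sum.cong[OF refl]) (simp add: pe algebra_simps)
    also have "\<dots> = (\<Sum>j\<in>UNIV. (A ** A) $ i $ j * M $ i $ j) - (\<theta> 1 + k) * (\<Sum>j\<in>UNIV. A $ i $ j * M $ i $ j)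
          + \<theta> 1 * k * (\<Sum>j\<in>UNIV. (if i = j then M $ i $ j else 0))"
      by (simp only: sum.distrib sum_subtractf sum_distrib_left)
    also have "(\<Sum>j\<in>UNIV. (if i = j then M $ i $ j else 0)) = (fD 0)^2"
      by (simp add: M_entry d_self)
    finally show ?thesis using row_AA[of i] row_A[of i] by (simp add: algebra_simps)
  qed
  show ?thesis unfolding S_entries row by simp
qed

end


context drgs begin

lemma vec1_V0: "vec 1 \<in> V 0"
  using A_one theta0 by (simp add: eigenspace_def)

lemma P0_vec1: "P 0 (vec 1) = vec 1"
  by (rule closest_point_self[OF vec1_V0])

lemma P1_vec1: "P 1 (vec 1) = 0"
proof (rule cp_unique[OF subV])
  show "0 \<in> V 1" using subspace_0[OF subV] .
  have ne: "\<theta> 0 \<noteq> \<theta> 1" using decr[of 0 1] D2 by simp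
  show "\<forall>x\<in>V 1. inner (vec 1 - 0) x = 0"
    using eig_orth[OF vec1_V0 _ ne] by simp
qed

lemma E0_ne_E1: "Ei 1 \<noteq> Ei 0"
proof
  assume "Ei 1 = Ei 0"
  then have "Ei 1 *v vec 1 = Ei 0 *v vec 1" by simp
  then have "(0::real^'n) = vec 1" unfolding Ei_mult P0_vec1 P1_vec1 .
  then show False by (simp add: vec_eq_iff)
qed

lemma pp0: "pp (\<theta> 0) = 0" by (simp add: pp_def theta0)
lemma pp1: "pp (\<theta> 1) = 0" by (simp add: pp_def)

lemma pA_E0: "pA ** Ei 0 = 0"
  unfolding matrix_eq
  by (simp add: matrix_vector_mul_assoc[symmetric] Ei_mult pA_eig[OF P_in] pp0)

lemma pA_E1: "pA ** Ei 1 = 0"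
  unfolding matrix_eq matrix_vector_mul_assoc[symmetric] Ei_mult pA_eig[OF P_in] pp1 by simp

lemma lt_to_S0:
  assumes "light_tail_with (Ei 0) ED (Ei 1)"
  shows "S = 0"
proof -
  obtain a b' where M: "hadamard ED ED = a *\<^sub>R Ei 0 + b' *\<^sub>R Ei 1"
    using assms unfolding light_tail_with_def by blast
  have pM: "pA ** M = 0"
    unfolding M_def M matrix_add_ldistrib matrix_scalar_ac scalar_matrix_assoc[symmetric] pA_E0 pA_E1 by simp
  have "S = (\<Sum>i\<in>UNIV. \<Sum>j\<in>UNIV. pA $ i $ j * M $ j $ i)"
    unfolding S_entries by (simp add: M_sym)
  also have "\<dots> = (\<Sum>i\<in>UNIV. (pA ** M) $ i $ i)" by (simp add: matrix_matrix_mult_def)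
  also have "\<dots> = 0" using pM by simp
  finally show ?thesis .
qed

lemma distfun_M: "distfun M"
  unfolding distfun_def using M_entry by (intro exI[of _ "\<lambda>j. (fD j)^2"]) simp

lemma S_terms:
  "S = (\<Sum>p\<in>UNIV. \<Sum>q\<in>UNIV. \<Sum>h\<in>{0..D}. pp (\<theta> h) * inner (P h (wv p q)) (P h (wv p q)))"
  unfolding S_def quad ..

lemma S0_P:
  assumes S0: "S = 0" and h: "2 \<le> h" "h \<le> D"
  shows "P h (wv p q) = 0"
proof -
  define F3 where "F3 p q h = pp (\<theta> h) * inner (P h (wv p q)) (P h (wv p q))" for p q h
  define F2 where "F2 p q = (\<Sum>h\<in>{0..D}. F3 p q h)" for p q
  define F1 where "F1 p = (\<Sum>q\<in>UNIV. F2 p q)" for p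
  have nn: "\<forall>h\<in>{0..D}. 0 \<le> F3 p q h" for p q unfolding F3_def by (simp add: pp_nonneg)
  have nn2: "\<forall>q\<in>UNIV. 0 \<le> F2 p q" for p unfolding F2_def by (intro ballI sum_nonneg) (use nn in blast)
  have nn3: "\<forall>p\<in>UNIV. 0 \<le> F1 p" unfolding F1_def by (intro ballI sum_nonneg) (use nn2 in blast)
  have "(\<Sum>p\<in>UNIV. F1 p) = 0" using S0 unfolding S_terms F1_def F2_def F3_def .
  moreover have "(\<Sum>p\<in>UNIV. F1 p) = 0 \<longleftrightarrow> (\<forall>p\<in>UNIV. F1 p = 0)"
    by (rule sum_nonneg_eq_0_iff) (use nn3 in auto)
  ultimately have "\<forall>p\<in>UNIV. F1 p = 0" by blast
  then have "F1 p = 0" by simp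
  moreover have "(\<Sum>q\<in>UNIV. F2 p q) = 0 \<longleftrightarrow> (\<forall>q\<in>UNIV. F2 p q = 0)"
    by (rule sum_nonneg_eq_0_iff) (use nn2 in auto)
  ultimately have "\<forall>q\<in>UNIV. F2 p q = 0" unfolding F1_def by blast
  then have "F2 p q = 0" by simp
  moreover have "(\<Sum>h\<in>{0..D}. F3 p q h) = 0 \<longleftrightarrow> (\<forall>h\<in>{0..D}. F3 p q h = 0)"
    by (rule sum_nonneg_eq_0_iff) (use nn in auto)
  ultimately have "\<forall>h\<in>{0..D}. F3 p q h = 0" unfolding F2_def by blast
  then have "F3 p q h = 0" using h by simp
  then have "inner (P h (wv p q)) (P h (wv p q)) = 0" using pp_pos[OF h] unfolding F3_def by simp
  then show ?thesis by simp
qed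

lemma S0_M:
  assumes S0: "S = 0"
  obtains g0 g1 where "M = g0 *\<^sub>R Ei 0 + g1 *\<^sub>R Ei 1"
    "\<forall>u\<in>V 0. M *v u = g0 *\<^sub>R u"
proof -
  have "\<forall>h\<in>{0..D}. \<exists>l. \<forall>u\<in>V h. M *v u = l *\<^sub>R u" using distfun_scal[OF distfun_M] unfolding scal_def .
  then obtain gg where gg: "\<forall>h\<in>{0..D}. \<forall>u\<in>V h. M *v u = gg h *\<^sub>R u" by (metis bchoice)
  have z: "gg h *\<^sub>R P h v = 0" if h: "h \<in> {2..D}" for h v
  proof -
    have h0: "h \<in> {0..D}" using h by simp
    have "gg h *\<^sub>R P h v = M *v P h v" using gg h0 P_in by metis
    also have "\<dots> = (\<Sum>p\<in>UNIV. \<Sum>q\<in>UNIV. inner (wv p q) (P h v) *\<^sub>R wv p q)" by (rule M_mv)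
    also have "\<dots> = 0"
    proof -
      have "inner (wv p q) (P h v) = 0" for p q
      proof -
        have "inner (wv p q) (P h v) = inner (P h (wv p q)) (P h v)" by (rule cp_selfadj[OF subV])
        also have "P h (wv p q) = 0" using S0_P[OF S0] h by simp
        finally show ?thesis by simp
      qed
      then show ?thesis by simp
    qed
    finally show ?thesis .
  qed
  have "M *v v = (gg 0 *\<^sub>R Ei 0 + gg 1 *\<^sub>R Ei 1) *v v" for v
  proof -
    have "M *v v = M *v (\<Sum>h\<in>{0..D}. P h v)" using decomp[of v] by simp
    also have "\<dots> = (\<Sum>h\<in>{0..D}. gg h *\<^sub>R P h v)"
      unfolding mv_sum by (rule sum.cong[OF refl]) (use gg P_in in simp)
    also have "\<dots> = gg 0 *\<^sub>R P 0 v + (gg 1 *\<^sub>R P 1 v + (\<Sum>h\<in>{2..D}. gg h *\<^sub>R P h v))"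
      using D2 by (simp add: sum.atLeast_Suc_atMost numeral_2_eq_2)
    also have "(\<Sum>h\<in>{2..D}. gg h *\<^sub>R P h v) = 0" by (rule sum.neutral) (use z in simp)
    finally show ?thesis
      by (simp add: matrix_vector_mult_add_rdistrib scaleR_matrix_vector_assoc[symmetric] Ei_mult)
  qed
  then have "M = gg 0 *\<^sub>R Ei 0 + gg 1 *\<^sub>R Ei 1" unfolding matrix_eq by blast
  moreover have "\<forall>u\<in>V 0. M *v u = gg 0 *\<^sub>R u" using gg by simp
  ultimately show ?thesis using that by blast
qed

end


context drgs begin

theorem main:
  fixes a1 :: real
  assumes a1d: "a1 = k - real (b 1) - real (c 1)" and a1nz: "a1 \<noteq> 0"
    and thD: "\<theta> D = - k / (a1 + 1)"
  shows "\<theta> 1 \<ge> (k - (a1 + 1) * (a1 + 2)) / (a1 + 1)^2 \<and>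
         (\<theta> 1 = (k - (a1 + 1) * (a1 + 2)) / (a1 + 1)^2 \<longleftrightarrow>
            light_tail_with (Ei 0) (Ei D) (Ei 1))"
proof -
  define t where "t = a1 + 1"
  define F where "F = fD 0"
  define u1 where "u1 = fD 1"
  define u2 where "u2 = fD 2"
  have c1r: "real (c 1) = 1" using c1 by simp
  have "c 1 + b 1 \<le> b 0" using cb_le[of 1] D2 by simp
  then have a1ge: "a1 \<ge> 0" using a1d by simp
  then have a1pos: "a1 > 0" using a1nz by simp
  have t1: "t > 1" using a1pos t_def by simp
  have b1r: "real (b 1) = k - t" using a1d c1r t_def by simp
  have b1pos: "real (b 1) \<ge> 1" using b1_pos by simp
  have kpos: "k > 0" using b1r b1pos t1 by simp
  have Fpos: "F > 0" using f0_pos F_def by simp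
  have thDt: "\<theta> D * t = - k" using thD t1 t_def by (simp add: field_simps)
  have tu1: "t * u1 = - F"
  proof -
    have "k * u1 = \<theta> D * F" using rec0 u1_def F_def by simp
    then have "k * (t * u1) = (\<theta> D * t) * F" by (simp add: algebra_simps)
    then have "k * (t * u1) = - (k * F)" using thDt by simp
    then have "k * (t * u1 + F) = 0" by (simp add: distrib_left)
    then have "t * u1 + F = 0" using kpos by simp
    then show ?thesis by simp
  qed
  have tu2: "t^2 * u2 = F"
  proof -
    have r1: "F + a1 * u1 + real (b 1) * u2 = \<theta> D * u1"
      using rec1 c1r F_def u1_def u2_def a1d by simp
    have "real (b 1) * (t^2 * u2) = real (b 1) * F"
      using r1 thDt tu1 b1r t_def by algebra
    then show ?thesis using b1pos by simp
  qed
  define Z where "Z = \<theta> 1 * t^2 - (k - t * (t + 1))"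
  define E where "E = T0 - (\<theta> 1 + k) * u1^2 + \<theta> 1 * F^2"
  have E4: "t^4 * E = F^2 * (t^2 - 1) * Z"
  proof -
    have "t^4 * E = t^4*F^2 + (t-1)*t^2*(t*u1)^2 + (k-t)*(t^2*u2)^2 - (\<theta> 1+k)*t^2*(t*u1)^2 + \<theta> 1*t^4*F^2"
      unfolding E_def T0_def using c1r b1r t_def F_def u1_def u2_def by algebra
    also have "\<dots> = F^2 * (t^2 - 1) * Z" unfolding tu1 tu2 Z_def by algebra
    finally show ?thesis .
  qed
  define C where "C = real CARD('n) * k * F^2 * (t^2 - 1) / t^4"
  have Cpos: "C > 0" unfolding C_def using kpos Fpos t1 by (simp add: power_strict_mono)
  have SCZ: "S = C * Z"
  proof -
    have "S = real CARD('n) * k * E" unfolding S_formula E_def u1_def F_def ..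
    also have "E = F^2 * (t^2 - 1) * Z / t^4" using E4 t1 by (simp add: field_simps)
    finally show ?thesis unfolding C_def by simp
  qed
  have Zge: "Z \<ge> 0" using S_nonneg SCZ Cpos by (simp add: zero_le_mult_iff)
  have bnd: "(k - (a1 + 1) * (a1 + 2)) / (a1 + 1)^2 = (k - t * (t + 1)) / t^2"
    unfolding t_def by (simp add: algebra_simps)
  have t2pos: "t^2 > 0" using t1 by simp
  have iff1: "\<theta> 1 \<ge> (k - t * (t + 1)) / t^2 \<longleftrightarrow> Z \<ge> 0"
    unfolding Z_def using t2pos by (simp add: pos_divide_le_eq)
  have iff2: "\<theta> 1 = (k - t * (t + 1)) / t^2 \<longleftrightarrow> Z = 0"
    unfolding Z_def using t2pos by (auto simp: field_simps)
  have SZ: "S = 0 \<longleftrightarrow> Z = 0" using SCZ Cpos by simp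
  have lt: "light_tail_with (Ei 0) (Ei D) (Ei 1) \<longleftrightarrow> S = 0"
  proof
    assume "light_tail_with (Ei 0) (Ei D) (Ei 1)"
    then show "S = 0" by (rule lt_to_S0)
  next
    assume S0: "S = 0"
    obtain g0 g1 where M: "M = g0 *\<^sub>R Ei 0 + g1 *\<^sub>R Ei 1" and MV: "\<forall>u\<in>V 0. M *v u = g0 *\<^sub>R u"
      using S0_M[OF S0] by blast
    obtain x :: 'n where True by simp
    have g0pos: "g0 > 0"
    proof -
      have "M *v vec 1 = g0 *\<^sub>R vec 1" using MV vec1_V0 by blast
      then have "(M *v vec 1) $ x = g0" by simp
      then have "g0 = (\<Sum>y\<in>UNIV. M $ x $ y)" by (simp add: matrix_vector_mult_def)
      also have "\<dots> \<ge> M $ x $ x"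
        by (rule member_le_sum) (simp_all add: M_entry)
      finally have "g0 \<ge> M $ x $ x" .
      moreover have "M $ x $ x = F^2" by (simp add: M_entry d_self F_def)
      ultimately show ?thesis using Fpos by (smt (verit) zero_less_power)
    qed
    have g1nz: "g1 \<noteq> 0"
    proof
      assume g1: "g1 = 0"
      have AE0: "A ** Ei 0 = k *\<^sub>R Ei 0"
        unfolding matrix_eq matrix_vector_mul_assoc[symmetric] scaleR_matrix_vector_assoc[symmetric] Ei_mult AP
        by (simp add: theta0)
      have "A ** M = k *\<^sub>R M"
        unfolding M g1 using AE0 by (simp add: matrix_scalar_ac scalar_matrix_assoc[symmetric])
      then have "(A ** M) $ x $ x = k * M $ x $ x" by simp
      moreover have "(A ** M) $ x $ x = k * u1^2"
      proof -
        have "(A ** M) $ x $ x = (\<Sum>z\<in>N x. M $ z $ x)" by (rule A_mult_entry)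
        also have "\<dots> = (\<Sum>z\<in>N x. u1^2)"
        proof (rule sum.cong[OF refl])
          fix z assume "z \<in> N x"
          then have "G z x" using symG by simp
          then show "M $ z $ x = u1^2" by (simp add: M_entry d_adj u1_def)
        qed
        also have "\<dots> = k * u1^2" using deg[of x] by simp
        finally show ?thesis .
      qed
      moreover have "M $ x $ x = F^2" by (simp add: M_entry d_self F_def)
      ultimately have "u1^2 = F^2" using kpos by simp
      then have "t^2 * F^2 = F^2" using tu1 by (metis mult.commute power_mult_distrib power2_minus)
      then have "t^2 = 1" using Fpos by simp
      moreover have "t^2 > 1" using one_less_power[OF t1, of 2] by simp
      ultimately show False by simp
    qed
    show "light_tail_with (Ei 0) (Ei D) (Ei 1)"
      unfolding light_tail_with_def
    proof (intro conjI exI)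
      show "Ei 1 \<noteq> Ei 0" by (rule E0_ne_E1)
      show "g0 \<noteq> 0" using g0pos by simp
      show "g1 \<noteq> 0" by (rule g1nz)
      show "hadamard ED ED = g0 *\<^sub>R Ei 0 + g1 *\<^sub>R Ei 1" using M unfolding M_def .
    qed
  qed
  show ?thesis unfolding bnd using iff1 iff2 SZ lt Zge by blast
qed

end

theorem lemma3p1:
  fixes E :: "'n::finite \<Rightarrow> 'n \<Rightarrow> bool"
    and D :: nat and b c :: "nat \<Rightarrow> nat" and \<theta> :: "nat \<Rightarrow> real"
  defines "k \<equiv> real (b 0)"
    and "a1 \<equiv> real (b 0) - real (b 1) - real (c 1)"
    and "Ei \<equiv> (\<lambda>i. min_idem (adj_matrix E) (\<theta> i))"
  assumes drg: "distance_regular E D b c"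
    and k3: "b 0 \<ge> 3"
    and D2: "D \<ge> 2"
    and a1nz: "a1 \<noteq> 0"
    and eigs: "eigenvalues (adj_matrix E) = \<theta> ` {0..D}"
    and decr: "\<And>i j. i < j \<Longrightarrow> j \<le> D \<Longrightarrow> \<theta> i > \<theta> j"
    and thD: "\<theta> D = - k / (a1 + 1)"
  shows "\<theta> 1 \<ge> (k - (a1 + 1) * (a1 + 2)) / (a1 + 1)^2 \<and>
         (\<theta> 1 = (k - (a1 + 1) * (a1 + 2)) / (a1 + 1)^2 \<longleftrightarrow>
            light_tail_with (Ei 0) (Ei D) (Ei 1))"
proof -
  have L: "drgs E D b c \<theta>"
    unfolding drgs_def drgs_axioms_def drg_def using drg D2 eigs decr by blast
  have a1d: "a1 = real (b 0) - real (b 1) - real (c 1)" unfolding a1_def ..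
  have thD': "\<theta> D = - real (b 0) / (a1 + 1)" using thD unfolding k_def .
  show ?thesis
    unfolding k_def Ei_def using drgs.main[OF L a1d a1nz thD'] .
qed

end
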